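(* Let $Z$ be a real-valued random variable with $\mathbb E(Z)=0$ and $\mathbb E(Z^2)\le2$, with distribution function $F_Z$, and let $\Phi$ be the distribution function of a standard normal random variable $Y$. For $p\ge1$ let $K_p=\int_0^1|F_Z^{-1}(t)-\Phi^{-1}(t)|^p\,dt$. Then for every $u\in(0,1/2]$, $$|F_Z^{-1}(1-u)-\Phi^{-1}(1-u)|\le\max\Big(\Big(\frac{(p+1)eK_p}{u\,Q_{1,Y}(u)}\Big)^{1/(p+1)},\ \Big(\frac{(p+1)eK_p}{u}\Big)^{1/p}\Big).$$
   Context: $F_Z^{-1}$ denotes the generalized inverse $F_Z^{-1}(t)=\inf\{x:F_Z(x)\ge t\}$. For a random variable $X$ with distribution function $F_X$, $Q_{1,X}(u)=\frac1u\int_0^uF_X^{-1}(1-t)\,dt$; thus $Q_{1,Y}(u)=\frac1u\int_0^u\Phi^{-1}(1-t)\,dt$. *)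

theory Defs
  imports "HOL-Probability.Probability"
begin

definition geninv :: "(real \<Rightarrow> real) \<Rightarrow> real \<Rightarrow> real" where
  "geninv F t = Inf {x. t \<le> F x}"

definition Phi :: "real \<Rightarrow> real" where
  "Phi = cdf (density lborel std_normal_density)"

definition Q1 :: "(real \<Rightarrow> real) \<Rightarrow> real \<Rightarrow> real" where
  "Q1 F u = (1 / u) * (LBINT t=0..u. geninv F (1 - t))"

definition Kp :: "(real \<Rightarrow> real) \<Rightarrow> real \<Rightarrow> ennreal" where
  "Kp F p = (\<integral>\<^sup>+ t\<in>{0<..<1}. ennreal (\<bar>geninv F t - geninv Phi t\<bar> powr p) \<partial>lborel)"

end

theory Submission
  imports Defs
begin

abbreviation "phi \<equiv> std_normal_density"
abbreviation "NN \<equiv> density lborel std_normal_density"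

lemma phi_eq: "phi x = exp (- x\<^sup>2 / 2) / sqrt (2 * pi)"
  by (simp add: std_normal_density_def)

lemma phi_pos: "phi x > 0"
  by (simp add: phi_eq)

lemma phi_cont: "continuous_on A phi"
  unfolding phi_eq by (intro continuous_intros) auto

lemma phi_isCont: "isCont phi x"
  unfolding phi_eq by (intro continuous_intros) auto

lemma phi_deriv: "(phi has_real_derivative (- x * phi x)) (at x)"
  unfolding phi_eq
  by (rule derivative_eq_intros refl | simp)+ (simp add: field_simps power2_eq_square)

lemma NN_real: "real_distribution NN"
  unfolding real_distribution_def real_distribution_axioms_def
  using prob_space_normal_density by auto

lemma Phi_diff: assumes "a \<le> y" shows "Phi y - Phi a = integral {a..y} phi"
proof (cases "a = y")
  case True then show ?thesis by simp
next
  case False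
  then have "a < y" using assms by simp
  interpret real_distribution NN by (rule NN_real)
  have 1: "Phi y - Phi a = measure NN {a<..y}"
    unfolding Phi_def using cdf_diff_eq[OF \<open>a < y\<close>] by simp
  have "emeasure NN {a<..y} = (\<integral>\<^sup>+x. ennreal (phi x) * indicator {a<..y} x \<partial>lborel)"
    by (subst emeasure_density) auto
  also have "\<dots> = (\<integral>\<^sup>+x. ennreal (indicator {a..y} x * phi x) \<partial>lborel)"
    by (intro nn_integral_cong_AE, use AE_lborel_singleton[of a] in eventually_elim)
       (auto simp: indicator_def)
  also have "\<dots> = integral {a..y} phi"
    by (rule nn_integral_has_integral_lebesgue) (auto intro: less_imp_le phi_pos integrable_integral integrable_continuous_interval phi_cont)
  finally have "emeasure NN {a<..y} = ennreal (integral {a..y} phi)" .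
  moreover have "integral {a..y} phi \<ge> 0"
    by (rule integral_nonneg) (auto intro: less_imp_le phi_pos integrable_continuous_interval phi_cont)
  ultimately show ?thesis using 1 by (simp add: measure_def)
qed

lemma Phi_deriv: "(Phi has_real_derivative phi x) (at x)"
proof -
  have "((\<lambda>y. integral {x-1..y} phi) has_real_derivative phi x) (at x within {x-1..x+1})"
    by (rule integral_has_real_derivative) (auto intro: phi_cont)
  then have d1: "((\<lambda>y. integral {x-1..y} phi) has_real_derivative phi x) (at x)"
    by (simp add: at_within_Icc_at)
  then have "((\<lambda>y. Phi (x-1) + integral {x-1..y} phi) has_real_derivative phi x) (at x)"
    using DERIV_add[OF DERIV_const d1] by simp
  then show ?thesis
    by (rule has_field_derivative_transform_within_open[where S="{x-1<..<x+1}"])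
       (auto simp: Phi_diff[symmetric])
qed

lemma Phi_isCont: "isCont Phi x"
  using Phi_deriv DERIV_isCont by blast

lemma Phi_strict: "x < y \<Longrightarrow> Phi x < Phi y"
  by (rule DERIV_pos_imp_increasing) (auto intro: Phi_deriv phi_pos)

lemma Phi_le_iff: "Phi x \<le> Phi y \<longleftrightarrow> x \<le> y"
  using Phi_strict[of x y] Phi_strict[of y x] by (cases x y rule: linorder_cases) auto

lemma Phi_top: "(Phi \<longlongrightarrow> 1) at_top"
  unfolding Phi_def by (rule real_distribution.cdf_lim_at_top_prob[OF NN_real])

lemma Phi_bot: "(Phi \<longlongrightarrow> 0) at_bot"
  unfolding Phi_def by (rule finite_borel_measure.cdf_lim_at_bot[OF real_distribution.finite_borel_measure_M[OF NN_real]])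

lemma Phi_le1: "Phi x \<le> 1"
  unfolding Phi_def by (rule real_distribution.cdf_bounded_prob[OF NN_real])

lemma Phi_ge0: "Phi x \<ge> 0"
  unfolding Phi_def by (rule finite_borel_measure.cdf_nonneg[OF real_distribution.finite_borel_measure_M[OF NN_real]])

lemma Phi_pos: "Phi x > 0"
  using Phi_strict[of "x - 1" x] Phi_ge0[of "x - 1"] by simp

lemma Phi_lt1: "Phi x < 1"
  using Phi_strict[of x "x + 1"] Phi_le1[of "x + 1"] by simp

lemma Phi_zero: "Phi 0 = 1/2"
proof -
  define S where "S x = Phi x + Phi (- x)" for x
  have "(S has_real_derivative 0) (at x)" for x
  proof -
    have "(S has_real_derivative (phi x + phi (-x) * (-1))) (at x)"
      unfolding S_def
      by (intro derivative_intros DERIV_chain2[OF Phi_deriv] Phi_deriv)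
    then show ?thesis by (simp add: phi_eq)
  qed
  then have c: "S x = S 0" for x by (metis DERIV_isconst_all)
  have "(S \<longlongrightarrow> 1) at_top"
    unfolding S_def
    using tendsto_add[OF Phi_top filterlim_compose[OF Phi_bot filterlim_uminus_at_bot_at_top]] by simp
  then have "((\<lambda>x::real. S 0) \<longlongrightarrow> 1) at_top"
    using tendsto_cong[of S "\<lambda>x. S 0" at_top 1] c by simp
  then have "S 0 = 1" by (simp add: tendsto_const_iff)
  then show ?thesis by (simp add: S_def)
qed

abbreviation "QQ \<equiv> geninv Phi"

lemma Q_Phi: "QQ (Phi x) = x"
proof -
  have "{y. Phi x \<le> Phi y} = {x..}" by (auto simp: Phi_le_iff)
  then show ?thesis unfolding geninv_def by simp
qed

lemma Phi_surj: assumes "0 < t" "t < 1" shows "\<exists>x. Phi x = t"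
proof -
  from Phi_bot assms have "eventually (\<lambda>x. Phi x < t) at_bot"
    by (simp add: order_tendstoD)
  then obtain a where a: "Phi a < t" by (auto simp: eventually_at_bot_linorder)
  from Phi_top assms have "eventually (\<lambda>x. Phi x > t) at_top"
    by (simp add: order_tendstoD)
  then obtain b0 where "\<forall>n\<ge>b0. t < Phi n" by (auto simp: eventually_at_top_linorder)
  then have b: "Phi (max a b0) > t" by simp
  have "a \<le> max a b0" by simp
  then show ?thesis
    using IVT[of Phi a t "max a b0"] a b Phi_isCont less_imp_le by blast
qed

lemma Phi_Q: assumes "0 < t" "t < 1" shows "Phi (QQ t) = t"
  using Phi_surj[OF assms] Q_Phi by auto

lemma Q_le_iff: assumes "0 < t" "t < 1" shows "QQ t \<le> x \<longleftrightarrow> t \<le> Phi x"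
  using Phi_Q[OF assms] Phi_le_iff by metis

lemma Q_ge_iff: assumes "0 < t" "t < 1" shows "x \<le> QQ t \<longleftrightarrow> Phi x \<le> t"
  using Phi_Q[OF assms] Phi_le_iff by metis

lemma Q_isCont: assumes "0 < t" "t < 1" shows "isCont QQ t"
proof -
  have "isCont QQ (Phi (QQ t))"
    by (rule isCont_inverse_function[where d=1]) (auto simp: Q_Phi Phi_isCont)
  then show ?thesis using Phi_Q[OF assms] by simp
qed

lemma Q_deriv: assumes "0 < t" "t < 1" shows "(QQ has_real_derivative 1 / phi (QQ t)) (at t)"
  using DERIV_inverse_function[OF Phi_deriv, of "QQ" t "0" 1] Phi_Q Q_isCont assms phi_pos
  by (simp add: divide_inverse less_imp_neq[symmetric])


lemma T_nn: "(\<integral>\<^sup>+t. ennreal (phi t) * indicator {x..} t \<partial>lborel) = ennreal (1 - Phi x)"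
  by (rule nn_integral_FTC_atLeast[OF _ Phi_deriv _ Phi_top]) auto

lemma T_pos: "1 - Phi x > 0"
  using Phi_lt1[of x] by simp

lemma hazard_aux:
  assumes "x \<le> y"
  shows "phi x * (1 - Phi y) \<le> phi y * (1 - Phi x)"
proof -
  define d where "d = y - x"
  have d: "d \<ge> 0" "y = x + d" using assms by (auto simp: d_def)
  have "ennreal (phi x * (1 - Phi y)) = ennreal (phi x) * ennreal (1 - Phi y)"
    using T_pos[of y] phi_pos[of x] by (simp add: ennreal_mult)
  also have "\<dots> = (\<integral>\<^sup>+t. ennreal (phi x) * (ennreal (phi t) * indicator {y..} t) \<partial>lborel)"
    by (simp add: T_nn[symmetric] nn_integral_cmult)
  also have "\<dots> = (\<integral>\<^sup>+s. ennreal (phi x) * (ennreal (phi (d + s)) * indicator {y..} (d + s)) \<partial>lborel)"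
    using nn_integral_real_affine[of "\<lambda>t. ennreal (phi x) * (ennreal (phi t) * indicator {y..} t)" 1 d] by simp
  also have "\<dots> \<le> (\<integral>\<^sup>+s. ennreal (phi y) * (ennreal (phi s) * indicator {x..} s) \<partial>lborel)"
  proof (intro nn_integral_mono)
    fix s
    show "ennreal (phi x) * (ennreal (phi (d + s)) * indicator {y..} (d + s))
        \<le> ennreal (phi y) * (ennreal (phi s) * indicator {x..} s)"
    proof (cases "x \<le> s")
      case True
      have "d * x \<le> d * s" using True d by (simp add: mult_left_mono)
      then have "- x\<^sup>2 / 2 + - (d + s)\<^sup>2 / 2 \<le> - y\<^sup>2 / 2 + - s\<^sup>2 / 2"
        using d by (simp add: power2_eq_square field_simps)
      then have "exp (- x\<^sup>2 / 2) * exp (- (d + s)\<^sup>2 / 2) \<le> exp (- y\<^sup>2 / 2) * exp (- s\<^sup>2 / 2)"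
        by (simp add: exp_add[symmetric])
      then have "phi x * phi (d + s) \<le> phi y * phi s"
        by (simp add: phi_eq divide_right_mono)
      then show ?thesis using True d
        by (simp add: indicator_def ennreal_mult[symmetric] mult.assoc[symmetric] ennreal_leI)
    next
      case False
      then show ?thesis using d by (simp add: indicator_def)
    qed
  qed
  also have "\<dots> = ennreal (phi y) * ennreal (1 - Phi x)"
    by (simp add: T_nn[symmetric] nn_integral_cmult)
  also have "\<dots> = ennreal (phi y * (1 - Phi x))"
    using T_pos[of x] phi_pos[of y] by (simp add: ennreal_mult)
  finally show ?thesis
    using T_pos[of x] phi_pos[of y] by (simp add: ennreal_le_iff)
qed

lemma hazard_mono:
  assumes "x \<le> y"
  shows "phi x / (1 - Phi x) \<le> phi y / (1 - Phi y)"
  using hazard_aux[OF assms] T_pos[of x] T_pos[of y]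
  by (simp add: divide_simps mult.commute)

lemma logconc:
  assumes "b \<ge> 0" "w \<ge> 0"
  shows "1 - Phi (b + w) \<le> (1 - Phi b) * exp (- w * (phi b / (1 - Phi b)))"
proof (cases "w = 0")
  case True then show ?thesis by simp
next
  case False
  then have "b < b + w" using assms by simp
  define g where "g z = ln (1 - Phi z)" for z
  have der: "(g has_real_derivative (- (phi z / (1 - Phi z)))) (at z)" for z
    unfolding g_def using T_pos[of z]
    by (auto intro!: derivative_eq_intros Phi_deriv simp: field_simps)
  obtain z where z: "b < z" "z < b + w" "g (b + w) - g b = (b + w - b) * (- (phi z / (1 - Phi z)))"
    using MVT2[OF \<open>b < b + w\<close>, of g "\<lambda>z. - (phi z / (1 - Phi z))"] der by blast
  have hz: "phi b / (1 - Phi b) \<le> phi z / (1 - Phi z)"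
    using z by (intro hazard_mono) simp
  have m: "w * (phi b / (1 - Phi b)) \<le> w * (phi z / (1 - Phi z))"
    using hz assms(2) by (rule mult_left_mono)
  have e: "g (b + w) - g b = - (w * (phi z / (1 - Phi z)))" using z(3) by simp
  have "g (b + w) \<le> g b - w * (phi b / (1 - Phi b))"
    using m e by linarith
  then have "exp (g (b + w)) \<le> exp (g b - w * (phi b / (1 - Phi b)))"
    by simp
  then show ?thesis
    unfolding g_def using T_pos[of b] T_pos[of "b+w"] by (simp add: exp_diff exp_minus divide_inverse)
qed

lemma phi_top: "(phi \<longlongrightarrow> 0) at_top"
proof -
  have sq: "LIM x at_top. (x::real) ^ 2 :> at_top"
    by (rule filterlim_pow_at_top[OF _ filterlim_ident]) simp
  have "LIM x at_top. (1/2) * (x::real) ^ 2 :> at_top"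
    using filterlim_tendsto_pos_mult_at_top[OF tendsto_const _ sq, of "1/2"] by simp
  then have "LIM x at_top. - ((1/2) * (x::real) ^ 2) :> at_bot"
    by (simp add: filterlim_uminus_at_top[symmetric])
  then have "((\<lambda>x::real. exp (- ((1/2) * x ^ 2))) \<longlongrightarrow> 0) at_top"
    by (rule filterlim_compose[OF exp_at_bot])
  then have "((\<lambda>x::real. exp (- ((1/2) * x ^ 2)) / sqrt (2 * pi)) \<longlongrightarrow> 0 / sqrt (2 * pi)) at_top"
    by (intro tendsto_divide tendsto_const) auto
  then show ?thesis unfolding phi_eq by simp
qed

lemma Q_at_right0: "filterlim (\<lambda>t. QQ (1 - t)) at_top (at_right 0)"
  unfolding filterlim_at_top
proof
  fix M :: real
  have "0 < 1 - Phi M" by (rule T_pos)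
  then show "eventually (\<lambda>t. M \<le> QQ (1 - t)) (at_right 0)"
    unfolding eventually_at_right_field
    using Phi_pos[of M] by (intro exI[of _ "1 - Phi M"]) (auto simp: Q_ge_iff)
qed

lemma Q_nonneg: assumes "0 < v" "v \<le> 1/2" shows "QQ (1 - v) \<ge> 0"
  using assms Q_ge_iff[of "1 - v" 0] by (simp add: Phi_zero)

lemma uQ1: assumes "0 < u" "u \<le> 1/2"
  shows "u * Q1 Phi u = phi (QQ (1 - u))"
proof -
  have der: "((\<lambda>t. phi (QQ (1 - t))) has_real_derivative QQ (1 - x)) (at x)"
    if "0 < x" "x < 1" for x
  proof -
    have "((\<lambda>t. phi (QQ (1 - t))) has_real_derivative
          (- QQ (1 - x) * phi (QQ (1 - x))) * (1 / phi (QQ (1 - x)) * (0 - 1))) (at x)"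
      by (intro DERIV_chain2[OF phi_deriv] DERIV_chain2[OF Q_deriv] derivative_intros) (use that in auto)
    then show ?thesis using phi_pos[of "QQ (1 - x)"] by simp
  qed
  have cont: "isCont (\<lambda>t. QQ (1 - t)) x" if "0 < x" "x < 1" for x
    using that by (intro continuous_intros isCont_o2[OF _ Q_isCont]) auto
  have contF: "isCont (\<lambda>t. phi (QQ (1 - t))) x" if "0 < x" "x < 1" for x
    using der[OF that] DERIV_isCont by blast
  have "(LBINT t=ereal 0..ereal u. QQ (1 - t)) = phi (QQ (1 - u)) - 0"
  proof (rule interval_integral_FTC_nonneg[where F="\<lambda>t. phi (QQ (1 - t))"])
    show "ereal 0 < ereal u" using assms by simp
    show "\<And>x. ereal 0 < ereal x \<Longrightarrow> ereal x < ereal u \<Longrightarrow> ((\<lambda>t. phi (QQ (1 - t))) has_real_derivative QQ (1 - x)) (at x)"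
      using assms by (intro der) auto
    show "\<And>x. ereal 0 < ereal x \<Longrightarrow> ereal x < ereal u \<Longrightarrow> isCont (\<lambda>t. QQ (1 - t)) x"
      using assms by (intro cont) auto
    show "AE x in lborel. ereal 0 < ereal x \<longrightarrow> ereal x < ereal u \<longrightarrow> 0 \<le> QQ (1 - x)"
      using assms by (intro AE_I2) (auto intro!: Q_nonneg)
    show "(((\<lambda>t. phi (QQ (1 - t))) \<circ> real_of_ereal) \<longlongrightarrow> 0) (at_right (ereal 0))"
      unfolding ereal_tendsto_simps1
      by (rule filterlim_compose[OF phi_top Q_at_right0])
    show "(((\<lambda>t. phi (QQ (1 - t))) \<circ> real_of_ereal) \<longlongrightarrow> phi (QQ (1 - u))) (at_left (ereal u))"
      unfolding ereal_tendsto_simps1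
      using contF[of u] assms by (simp add: isCont_def filterlim_at_split)
  qed
  then show ?thesis using assms unfolding Q1_def by (simp add: zero_ereal_def)
qed

lemma powr_lin_ineq:
  fixes m p L d :: real
  assumes "m > 0" "p > 0" "0 \<le> L" "L \<le> m * d"
  shows "L * d powr p \<le> m * (d powr (p + 1) - (d - L / m) powr (p + 1))"
proof -
  define h where "h = L / m"
  have h: "0 \<le> h" "h \<le> d" "L = m * h" using assms by (auto simp: h_def pos_divide_le_eq mult.commute)
  have e1: "d powr (p + 1) = d * d powr p"
    using powr_add[of d p 1] h by (simp add: mult.commute)
  have e2: "(d - h) powr (p + 1) = (d - h) * (d - h) powr p"
    using powr_add[of "d - h" p 1] h by (simp add: mult.commute)
  have "(d - h) powr p \<le> d powr p" using h assms by (intro powr_mono2) auto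
  then have "(d - h) * (d - h) powr p \<le> (d - h) * d powr p" using h by (intro mult_left_mono) auto
  then have "h * d powr p \<le> d powr (p + 1) - (d - h) powr (p + 1)"
    using e1 e2 by (simp add: algebra_simps)
  then have "m * (h * d powr p) \<le> m * (d powr (p + 1) - (d - h) powr (p + 1))"
    using assms(1) by (intro mult_left_mono) auto
  then show ?thesis using h(3) by (simp add: mult.assoc)
qed

lemma int_dec:
  fixes m p L d c :: real
  assumes "m > 0" "p > 0" "0 \<le> L" "L \<le> m * d"
  shows "((\<lambda>t. (d - (t - c) / m) powr p) has_integral
          m / (p + 1) * (d powr (p + 1) - (d - L / m) powr (p + 1))) {c..c+L}"
proof -
  define H where "H t = - (m / (p + 1)) * (d - (t - c) / m) powr (p + 1)" for t
  have "((\<lambda>t. (d - (t - c) / m) powr p) has_integral (H (c + L) - H c)) {c..c+L}"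
  proof (rule fundamental_theorem_of_calculus_interior[of c "c + L" H])
    show "c \<le> c + L" using assms by simp
    have nn: "\<forall>t\<in>{c..c+L}. d - (t - c) / m \<ge> 0 \<and> (d - (t - c) / m = 0 \<longrightarrow> p + 1 > 0)"
      using assms by (auto simp: pos_divide_le_eq mult.commute)
    have "continuous_on {c..c + L} (\<lambda>t. (d - (t - c) / m) powr (p + 1))"
      by (rule continuous_on_powr'[OF _ continuous_on_const nn]) (intro continuous_intros, use assms in auto)
    then show "continuous_on {c..c + L} H"
      unfolding H_def by (rule continuous_on_mult[OF continuous_on_const])
    fix x assume x: "x \<in> {c<..<c + L}"
    then have pos: "d - (x - c) / m > 0" using assms by (simp add: divide_simps mult.commute)
    have "(H has_real_derivative (d - (x - c) / m) powr p) (at x)"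
      unfolding H_def using pos assms
      by (auto intro!: derivative_eq_intros simp: divide_simps)
    then show "(H has_vector_derivative (d - (x - c) / m) powr p) (at x)"
      by (simp add: has_real_derivative_iff_has_vector_derivative)
  qed
  then show ?thesis by (simp add: H_def right_diff_distrib)
qed

lemma int_inc:
  fixes m p L d c :: real
  assumes "m > 0" "p > 0" "0 \<le> L" "L \<le> m * d"
  shows "((\<lambda>t. (d - (c - t) / m) powr p) has_integral
          m / (p + 1) * (d powr (p + 1) - (d - L / m) powr (p + 1))) {c-L..c}"
proof -
  define H where "H t = (m / (p + 1)) * (d - (c - t) / m) powr (p + 1)" for t
  have "((\<lambda>t. (d - (c - t) / m) powr p) has_integral (H c - H (c - L))) {c-L..c}"
  proof (rule fundamental_theorem_of_calculus_interior[of "c - L" c H])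
    show "c - L \<le> c" using assms by simp
    have nn: "\<forall>t\<in>{c - L..c}. d - (c - t) / m \<ge> 0 \<and> (d - (c - t) / m = 0 \<longrightarrow> p + 1 > 0)"
      using assms by (auto simp: pos_divide_le_eq mult.commute)
    have "continuous_on {c - L..c} (\<lambda>t. (d - (c - t) / m) powr (p + 1))"
      by (rule continuous_on_powr'[OF _ continuous_on_const nn]) (intro continuous_intros, use assms in auto)
    then show "continuous_on {c - L..c} H"
      unfolding H_def by (rule continuous_on_mult[OF continuous_on_const])
    fix x assume x: "x \<in> {c - L<..<c}"
    then have pos: "d - (c - x) / m > 0" using assms by (simp add: divide_simps mult.commute)
    have "(H has_real_derivative (d - (c - x) / m) powr p) (at x)"
      unfolding H_def using pos assms
      by (auto intro!: derivative_eq_intros simp: divide_simps)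
    then show "(H has_vector_derivative (d - (c - x) / m) powr p) (at x)"
      by (simp add: has_real_derivative_iff_has_vector_derivative)
  qed
  then show ?thesis by (simp add: H_def right_diff_distrib)
qed

lemma geninv_mono:
  assumes D: "real_distribution D" and st: "0 < s" "s \<le> t" "t < 1"
  shows "geninv (cdf D) s \<le> geninv (cdf D) t"
proof -
  interpret real_distribution D by (rule D)
  have "eventually (\<lambda>x. cdf D x > t) at_top"
    using cdf_lim_at_top_prob st by (simp add: order_tendstoD)
  then obtain x1 where x1: "\<forall>x\<ge>x1. cdf D x > t" by (auto simp: eventually_at_top_linorder)
  have ne: "{x. t \<le> cdf D x} \<noteq> {}" using x1 by (auto intro!: exI[of _ x1] less_imp_le)
  have "eventually (\<lambda>x. cdf D x < s) at_bot"
    using cdf_lim_at_bot st by (simp add: order_tendstoD)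
  then obtain x0 where x0: "\<forall>x\<le>x0. cdf D x < s" by (auto simp: eventually_at_bot_linorder)
  have bdd: "bdd_below {x. s \<le> cdf D x}"
    unfolding bdd_below_def using x0 by (metis linorder_not_le mem_Collect_eq less_imp_le)
  have "{x. t \<le> cdf D x} \<subseteq> {x. s \<le> cdf D x}" using st by auto
  then show ?thesis unfolding geninv_def by (rule cInf_superset_mono[OF ne bdd])
qed

lemma e_ge2: "exp 1 \<ge> (2::real)"
  using exp_ge_add_one_self[of 1] by simp

lemma exp_ineq:
  fixes y :: real
  assumes "0 \<le> y" "y \<le> 1 / exp 1"
  shows "exp (- (exp 1 * y)) \<le> 1 - y"
proof -
  have ey: "exp 1 * y \<le> 1" using assms by (simp add: field_simps)
  have "1 + exp 1 * y \<le> exp (exp 1 * y)" by (rule exp_ge_add_one_self)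
  moreover have "0 < 1 + exp 1 * y" using assms by (simp add: add_pos_nonneg)
  ultimately have "exp (- (exp 1 * y)) \<le> 1 / (1 + exp 1 * y)"
    unfolding exp_minus inverse_eq_divide by (intro divide_left_mono) auto
  also have "\<dots> \<le> 1 - y"
  proof -
    have "y * (exp 1 - 1 - exp 1 * y) \<ge> 0"
      using assms ey e_ge2 by (intro mult_nonneg_nonneg) auto
    then have "1 \<le> (1 - y) * (1 + exp 1 * y)" by (simp add: algebra_simps)
    moreover have "0 < 1 + exp 1 * y" using assms by (simp add: add_pos_nonneg)
    ultimately show ?thesis by (simp add: divide_le_eq)
  qed
  finally show ?thesis .
qed

lemma phi0: "phi 0 = 1 / sqrt (2 * pi)"
  by (simp add: phi_eq)

lemma u_bound:
  assumes "0 < u" "u \<le> 1/2"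
  shows "u \<le> phi (QQ (1 - u)) * sqrt 2"
proof -
  define b where "b = QQ (1 - u)"
  have b0: "b \<ge> 0" using Q_nonneg assms by (simp add: b_def)
  have Pb: "1 - Phi b = u" using Phi_Q[of "1 - u"] assms by (simp add: b_def)
  have "phi 0 / (1 - Phi 0) \<le> phi b / (1 - Phi b)" using b0 by (rule hazard_mono)
  then have h: "2 / sqrt (2 * pi) \<le> phi b / u" by (simp add: Pb Phi_zero phi0)
  have "sqrt (2 * pi) \<le> sqrt 8" using pi_less_4 by simp
  also have "sqrt 8 = 2 * sqrt 2"
    by (metis real_sqrt_mult real_sqrt_four mult.commute num_double numeral_times_numeral power2_eq_square real_sqrt_abs abs_numeral)
  finally have s: "sqrt (2 * pi) \<le> 2 * sqrt 2" .
  have "2 * u \<le> phi b * sqrt (2 * pi)"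
    using h assms by (simp add: field_simps)
  also have "\<dots> \<le> phi b * (2 * sqrt 2)"
    using s phi_pos[of b] by (intro mult_left_mono) auto
  finally show ?thesis by (simp add: b_def)
qed

lemma Kp_lower:
  fixes D :: "real measure" and u p :: real
  assumes D: "real_distribution D" and u: "0 < u" "u \<le> 1/2" and p: "p \<ge> 1"
  defines "a \<equiv> geninv (cdf D) (1 - u)" and "b \<equiv> QQ (1 - u)"
  defines "d \<equiv> \<bar>a - b\<bar>" and "m \<equiv> phi b / exp 1"
  defines "L \<equiv> min (m * d) (u / exp 1)"
  shows "ennreal (L * d powr p / (p + 1)) \<le> Kp (cdf D) p"
proof -
  have e2: "exp 1 \<ge> (2::real)" by (rule e_ge2)
  have m: "m > 0" using phi_pos[of b] by (simp add: m_def)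
  have L0: "0 \<le> L" using m u by (simp add: L_def d_def)
  have Lmd: "L \<le> m * d" by (simp add: L_def)
  have Lu: "L \<le> u / exp 1" by (simp add: L_def)
  have Lu2: "L \<le> u / 2" using Lu u e2 by (smt (verit) frac_le)
  have b0: "b \<ge> 0" using Q_nonneg u by (simp add: b_def)
  have Pb: "Phi b = 1 - u" using Phi_Q[of "1 - u"] u by (simp add: b_def)
  have p0: "p > 0" using p by simp
  have ineq: "L * d powr p / (p + 1) \<le> m / (p + 1) * (d powr (p + 1) - (d - L / m) powr (p + 1))"
    using powr_lin_ineq[OF m p0 L0 Lmd] p by (simp add: divide_right_mono)
  define G where "G t = \<bar>geninv (cdf D) t - QQ t\<bar> powr p" for t
  have Kp_eq: "Kp (cdf D) p = (\<integral>\<^sup>+t. ennreal (G t) * indicator {0<..<1} t \<partial>lborel)"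
    unfolding Kp_def G_def by simp
  have main: "\<exists>I g. ((g has_integral m / (p + 1) * (d powr (p + 1) - (d - L / m) powr (p + 1))) I)
       \<and> (\<forall>t\<in>I. t \<in> {0<..<1} \<and> g t \<le> G t) \<and> (\<forall>t. g t \<ge> 0)"
  proof (cases "b \<le> a")
    case True
    then have d: "d = a - b" by (simp add: d_def)
    show ?thesis
    proof (intro exI conjI ballI allI)
      show "((\<lambda>t. (d - (t - (1 - u)) / m) powr p) has_integral
          m / (p + 1) * (d powr (p + 1) - (d - L / m) powr (p + 1))) {1 - u..1 - u + L}"
        by (rule int_dec[OF m p0 L0 Lmd])
      fix t assume t: "t \<in> {1 - u..1 - u + L}"
      define s where "s = t - (1 - u)"
      have s: "0 \<le> s" "s \<le> L" using t by (auto simp: s_def)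
      have t01: "0 < t" "t < 1" using t u Lu2 by auto
      then show "t \<in> {0<..<1}" by simp
      have Fa: "a \<le> geninv (cdf D) t"
        unfolding a_def using t u t01 by (intro geninv_mono[OF D]) auto
      have se0: "s \<le> u / exp 1" using s Lu by linarith
      have se: "s / u \<le> 1 / exp 1" using se0 u by (simp add: pos_divide_le_eq)
      have "1 - Phi (b + s / m) \<le> (1 - Phi b) * exp (- (s / m) * (phi b / (1 - Phi b)))"
        using b0 s m by (intro logconc) auto
      also have "\<dots> = u * exp (- (exp 1 * (s / u)))"
      proof -
        have Tb: "1 - Phi b = u" using Pb by simp
        have "- (s / m) * (phi b / u) = - (exp 1 * (s / u))"
          using phi_pos[of b] u by (simp add: m_def field_simps)
        then show ?thesis unfolding Tb by simp
      qed
      also have "\<dots> \<le> u * (1 - s / u)"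
        using s u se by (intro mult_left_mono exp_ineq) auto
      also have "\<dots> = u - s" using u by (simp add: field_simps)
      finally have "t \<le> Phi (b + s / m)" by (simp add: s_def)
      then have Qt: "QQ t \<le> b + s / m" using Q_le_iff t01 by blast
      have sm: "s / m \<le> d" using s Lmd m by (simp add: pos_divide_le_eq mult.commute)
      have "d - s / m \<le> \<bar>geninv (cdf D) t - QQ t\<bar>" using Fa Qt d by linarith
      moreover have "0 \<le> d - s / m" using sm by simp
      ultimately show "(d - (t - (1 - u)) / m) powr p \<le> G t"
        unfolding G_def s_def[symmetric] using p0 by (intro powr_mono2) auto
    qed simp
  next
    case False
    then have d: "d = b - a" by (simp add: d_def)
    show ?thesis
    proof (intro exI conjI ballI allI)
      show "((\<lambda>t. (d - ((1 - u) - t) / m) powr p) has_integral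
          m / (p + 1) * (d powr (p + 1) - (d - L / m) powr (p + 1))) {1 - u - L..1 - u}"
        by (rule int_inc[OF m p0 L0 Lmd])
      fix t assume t: "t \<in> {1 - u - L..1 - u}"
      define s where "s = (1 - u) - t"
      have s: "0 \<le> s" "s \<le> L" using t by (auto simp: s_def)
      have t01: "0 < t" "t < 1" using t u Lu2 by auto
      then show "t \<in> {0<..<1}" by simp
      have Fa: "geninv (cdf D) t \<le> a"
        unfolding a_def using t u t01 by (intro geninv_mono[OF D]) auto
      have "Phi (b - s / m) \<le> Phi b - s"
      proof (cases "s = 0")
        case True then show ?thesis by simp
      next
        case False
        then have sp: "s > 0" using s by simp
        define w where "w = s / m"
        have wp: "w > 0" using sp m by (simp add: w_def)
        obtain z where z: "b - w < z" "z < b" "Phi b - Phi (b - w) = (b - (b - w)) * phi z"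
          using MVT2[of "b - w" b Phi phi] wp Phi_deriv by auto
        have "s \<le> u / exp 1" using s Lu by linarith
        then have "s * exp 1 \<le> u" by (simp add: pos_le_divide_eq)
        then have "w \<le> u / phi b" using phi_pos[of b] by (simp add: w_def m_def field_simps)
        also have "\<dots> \<le> sqrt 2" using u_bound[OF u] phi_pos[of b] by (simp add: b_def divide_le_eq mult.commute)
        finally have w2: "w \<le> sqrt 2" .
        have "z\<^sup>2 \<le> b\<^sup>2 + 2"
        proof (cases "z \<ge> 0")
          case True then have "z\<^sup>2 \<le> b\<^sup>2" using z by (intro power_mono) auto
          then show ?thesis by simp
        next
          case False
          then have "- z \<le> sqrt 2" using z w2 b0 by linarith
          then have "(- z)\<^sup>2 \<le> (sqrt 2)\<^sup>2" using False by (intro power_mono) auto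
          then have "z\<^sup>2 \<le> 2" by simp
          then show ?thesis using zero_le_power2[of b] by linarith
        qed
        then have "exp (- b\<^sup>2 / 2) / exp 1 \<le> exp (- z\<^sup>2 / 2)"
          by (simp add: exp_diff[symmetric])
        then have pz: "phi b / exp 1 \<le> phi z" by (simp add: phi_eq divide_right_mono field_simps)
        have "s = w * m" using m by (simp add: w_def)
        also have "\<dots> \<le> w * phi z" unfolding m_def using pz wp by (intro mult_left_mono) auto
        finally have "s \<le> w * phi z" .
        moreover have "Phi b - Phi (b - w) = w * phi z" using z(3) by simp
        ultimately have "Phi (b - w) \<le> Phi b - s" by linarith
        then show ?thesis by (simp add: w_def)
      qed
      then have "Phi (b - s / m) \<le> t" using Pb by (simp add: s_def)
      then have Qt: "b - s / m \<le> QQ t" using Q_ge_iff t01 by blast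
      have sm: "s / m \<le> d" using s Lmd m by (simp add: pos_divide_le_eq mult.commute)
      have "d - s / m \<le> \<bar>geninv (cdf D) t - QQ t\<bar>" using Fa Qt d by linarith
      moreover have "0 \<le> d - s / m" using sm by simp
      ultimately show "(d - ((1 - u) - t) / m) powr p \<le> G t"
        unfolding G_def s_def[symmetric] using p0 by (intro powr_mono2) auto
    qed simp
  qed
  then obtain I g where I: "(g has_integral m / (p + 1) * (d powr (p + 1) - (d - L / m) powr (p + 1))) I"
    and Ig: "\<forall>t\<in>I. t \<in> {0<..<1} \<and> g t \<le> G t" and g0: "\<forall>t. g t \<ge> 0" by blast
  have "ennreal (L * d powr p / (p + 1)) \<le> ennreal (m / (p + 1) * (d powr (p + 1) - (d - L / m) powr (p + 1)))"
    using ineq by (rule ennreal_leI)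
  also have "\<dots> = (\<integral>\<^sup>+t. ennreal (indicator I t * g t) \<partial>lborel)"
    using nn_integral_has_integral_lebesgue[OF _ I] g0 by simp
  also have "\<dots> \<le> (\<integral>\<^sup>+t. ennreal (G t) * indicator {0<..<1} t \<partial>lborel)"
    using Ig by (intro nn_integral_mono) (auto simp: indicator_def ennreal_leI)
  finally show ?thesis using Kp_eq by simp
qed

theorem proposition5p1:
  fixes M :: "'a measure" and Z :: "'a \<Rightarrow> real" and p u :: real
  assumes "prob_space M"
    and "Z \<in> borel_measurable M"
    and "integrable M Z" and "integral\<^sup>L M Z = 0"
    and "integrable M (\<lambda>\<omega>. (Z \<omega>)\<^sup>2)" and "integral\<^sup>L M (\<lambda>\<omega>. (Z \<omega>)\<^sup>2) \<le> 2"
    and "p \<ge> 1"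
    and "Kp (cdf (distr M borel Z)) p < \<infinity>"
    and "0 < u" and "u \<le> 1 / 2"
  shows "\<bar>geninv (cdf (distr M borel Z)) (1 - u) - geninv Phi (1 - u)\<bar>
    \<le> max (((p + 1) * exp 1 * enn2real (Kp (cdf (distr M borel Z)) p) / (u * Q1 Phi u)) powr (1 / (p + 1)))
           (((p + 1) * exp 1 * enn2real (Kp (cdf (distr M borel Z)) p) / u) powr (1 / p))"
proof -
  interpret prob_space M by (rule assms(1))
  define D where "D = distr M borel Z"
  have RD: "real_distribution D" unfolding D_def using assms(2) by simp
  define a where "a = geninv (cdf D) (1 - u)"
  define b where "b = QQ (1 - u)"
  define d where "d = \<bar>a - b\<bar>"
  define m where "m = phi b / exp 1"
  define L where "L = min (m * d) (u / exp 1)"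
  define K where "K = enn2real (Kp (cdf D) p)"
  have u: "0 < u" "u \<le> 1/2" using assms by auto
  have p: "p \<ge> 1" using assms by simp
  have d0: "d \<ge> 0" by (simp add: d_def)
  have pb: "phi b > 0" by (rule phi_pos)
  have e0: "exp 1 > (0::real)" by simp
  have m0: "m > 0" using pb by (simp add: m_def)
  have L0: "L \<ge> 0" using m0 d0 u by (simp add: L_def)
  have lowE: "ennreal (L * d powr p / (p + 1)) \<le> Kp (cdf D) p"
    using Kp_lower[OF RD u p] by (simp add: a_def b_def d_def m_def L_def)
  have fin: "Kp (cdf D) p < top" using assms(8) by (simp add: D_def infinity_ennreal_def)
  have "enn2real (ennreal (L * d powr p / (p + 1))) \<le> K"
    unfolding K_def by (rule enn2real_mono[OF lowE fin])
  then have lowK: "L * d powr p / (p + 1) \<le> K"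
    using L0 p by simp
  then have lowK2: "L * d powr p \<le> (p + 1) * K"
    using p by (simp add: divide_le_eq mult.commute)
  have uQ: "u * Q1 Phi u = phi b" using uQ1[OF u] by (simp add: b_def)
  have dd: "d * d powr p = d powr (p + 1)"
    using powr_add[of d p 1] d0 by (simp add: mult.commute)
  define X1 where "X1 = (p + 1) * exp 1 * K / (u * Q1 Phi u)"
  define X2 where "X2 = (p + 1) * exp 1 * K / u"
  have "d \<le> max (X1 powr (1 / (p + 1))) (X2 powr (1 / p))"
  proof (cases "m * d \<le> u / exp 1")
    case True
    then have "L = m * d" by (simp add: L_def)
    then have "phi b * d * d powr p = exp 1 * (L * d powr p)"
      by (simp add: m_def)
    also have "\<dots> \<le> exp 1 * ((p + 1) * K)"
      using lowK2 by (intro mult_left_mono) auto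
    finally have "phi b * d * d powr p \<le> exp 1 * ((p + 1) * K)" .
    moreover have "phi b * d * d powr p = phi b * d powr (p + 1)"
      using dd by (simp add: mult.assoc)
    ultimately have "phi b * d powr (p + 1) \<le> exp 1 * ((p + 1) * K)"
      by linarith
    also have "exp 1 * ((p + 1) * K) = (p + 1) * exp 1 * K" by (simp add: algebra_simps)
    finally have "phi b * d powr (p + 1) \<le> (p + 1) * exp 1 * K" .
    then have X1: "d powr (p + 1) \<le> X1"
      unfolding X1_def uQ using pb by (simp add: pos_le_divide_eq mult.commute)
    have "d = (d powr (p + 1)) powr (1 / (p + 1))"
      using d0 p by (simp add: powr_powr)
    also have "\<dots> \<le> X1 powr (1 / (p + 1))"
      using X1 p by (intro powr_mono2) auto
    finally show ?thesis by simp
  next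
    case False
    then have "L = u / exp 1" by (simp add: L_def)
    then have "u * d powr p = exp 1 * (L * d powr p)"
      by simp
    also have "\<dots> \<le> exp 1 * ((p + 1) * K)"
      using lowK2 by (intro mult_left_mono) auto
    finally have "u * d powr p \<le> exp 1 * ((p + 1) * K)" .
    then have X2: "d powr p \<le> X2"
      unfolding X2_def using u by (simp add: pos_le_divide_eq mult.commute mult.left_commute)
    have "d = (d powr p) powr (1 / p)"
      using d0 p by (simp add: powr_powr)
    also have "\<dots> \<le> X2 powr (1 / p)"
      using X2 p by (intro powr_mono2) auto
    finally show ?thesis by simp
  qed
  then show ?thesis
    by (simp add: X1_def X2_def K_def D_def d_def a_def b_def)
qed

end
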